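(* Let $K$ be a CM field of degree $2g$ with maximal totally real subfield $F$, and let $\mathcal{O}\subseteq K$ be an order with $\mathcal{O}\cap F=\mathcal{O}_F$. Let $\{\alpha_1,\dots,\alpha_g\}$, $\{\tau_1,\dots,\tau_{2g}\}$, $\{\omega_1,\dots,\omega_{2g}\}$ be $\mathbb{Z}$-bases of $\mathcal{O}_F$, $\mathcal{O}$, $\mathcal{O}_K$ respectively. Define $b_{i,j,k}\in\mathbb{Q}$ by $\alpha_i\omega_j=\sum_{k=1}^{2g}b_{i,j,k}\tau_k$, let $M_j$ be the $2g\times g$ matrix whose $(k,i)$ entry is $b_{i,j,k}$, and let $M$ be the $(2g)^2\times g$ matrix obtained by stacking $M_1,\dots,M_{2g}$ vertically. Let $d$ be the greatest common divisor of all integers $d'$ such that $d'M$ has integer entries, and let $H\in\mathbb{Z}^{g\times g}$ be the row Hermite normal form of $dM$ (with its zero rows removed). Then $H$ is invertible, and the ideal $\mathfrak{f}^+=\mathfrak{f}\cap\mathcal{O}_F$, where $\mathfrak{f}=\{\alpha\in K:\alpha\mathcal{O}_K\subseteq\mathcal{O}\}$ is the conductor ideal of $\mathcal{O}$, equals $\mathbb{Z}\beta_1+\dots+\mathbb{Z}\beta_g$, where $(\beta_1,\dots,\beta_g)=(\alpha_1,\dots,\alpha_g)\,dH^{-1}$. In other words, the algorithm that computes $b_{i,j,k}$, $M$, $d$, $H$ and outputs this $\mathbb{Z}$-basis correctly computes $\mathfrak{f}^+$.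
   Context: A CM field is a totally imaginary quadratic extension of a totally real number field; $F$ denotes that totally real subfield. The row Hermite normal form of an integer matrix $N$ is the (unique) Hermite normal form of the lattice spanned by the rows, obtained as $UN$ for a unimodular integer matrix $U$. The ideal $\mathfrak{f}\cap\mathcal{O}_F$ uniquely identifies orders of $K$ containing $\mathcal{O}_F$. *)

theory Defs
  imports "HOL-Computational_Algebra.Polynomial" "Jordan_Normal_Form.Matrix"
begin

text \<open>Number fields are modelled as subfields of the complex numbers.\<close>

definition is_subfield :: "complex set \<Rightarrow> bool" where
  "is_subfield K \<longleftrightarrow> 0 \<in> K \<and> 1 \<in> K \<and>
     (\<forall>x\<in>K. \<forall>y\<in>K. x + y \<in> K \<and> x * y \<in> K) \<and>
     (\<forall>x\<in>K. - x \<in> K \<and> inverse x \<in> K)"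

definition int_span :: "nat \<Rightarrow> (nat \<Rightarrow> complex) \<Rightarrow> complex set" where
  "int_span n v = {\<Sum>i<n. of_int (c i) * v i | c. True}"

definition int_basis :: "nat \<Rightarrow> (nat \<Rightarrow> complex) \<Rightarrow> complex set \<Rightarrow> bool" where
  "int_basis n v A \<longleftrightarrow> (\<forall>i<n. v i \<in> A) \<and> A = int_span n v \<and>
     (\<forall>c::nat \<Rightarrow> int. (\<Sum>i<n. of_int (c i) * v i) = 0 \<longrightarrow> (\<forall>i<n. c i = 0))"

definition rat_span :: "nat \<Rightarrow> (nat \<Rightarrow> complex) \<Rightarrow> complex set" where
  "rat_span n v = {\<Sum>i<n. of_rat (c i) * v i | c. True}"

definition rat_basis :: "nat \<Rightarrow> (nat \<Rightarrow> complex) \<Rightarrow> complex set \<Rightarrow> bool" where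
  "rat_basis n v K \<longleftrightarrow> (\<forall>i<n. v i \<in> K) \<and> K = rat_span n v \<and>
     (\<forall>c::nat \<Rightarrow> rat. (\<Sum>i<n. of_rat (c i) * v i) = 0 \<longrightarrow> (\<forall>i<n. c i = 0))"

definition number_field :: "complex set \<Rightarrow> bool" where
  "number_field K \<longleftrightarrow> is_subfield K \<and> (\<exists>n v. rat_basis n v K)"

text \<open>Field embeddings of K into the complex numbers (only their values on K matter).\<close>
definition embedding :: "complex set \<Rightarrow> (complex \<Rightarrow> complex) \<Rightarrow> bool" where
  "embedding K \<sigma> \<longleftrightarrow> \<sigma> 1 = 1 \<and>
     (\<forall>x\<in>K. \<forall>y\<in>K. \<sigma> (x + y) = \<sigma> x + \<sigma> y \<and> \<sigma> (x * y) = \<sigma> x * \<sigma> y)"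

definition totally_real :: "complex set \<Rightarrow> bool" where
  "totally_real K \<longleftrightarrow> (\<forall>\<sigma>. embedding K \<sigma> \<longrightarrow> (\<forall>x\<in>K. \<sigma> x \<in> \<real>))"

definition totally_imaginary :: "complex set \<Rightarrow> bool" where
  "totally_imaginary K \<longleftrightarrow> (\<forall>\<sigma>. embedding K \<sigma> \<longrightarrow> (\<exists>x\<in>K. \<sigma> x \<notin> \<real>))"

definition quadratic_ext :: "complex set \<Rightarrow> complex set \<Rightarrow> bool" where
  "quadratic_ext F K \<longleftrightarrow> F \<subseteq> K \<and>
     (\<exists>x\<in>K. x \<notin> F \<and> K = {a + b * x | a b. a \<in> F \<and> b \<in> F})"

definition cm_field :: "complex set \<Rightarrow> bool" where
  "cm_field K \<longleftrightarrow> number_field K \<and> totally_imaginary K \<and>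
     (\<exists>F. is_subfield F \<and> totally_real F \<and> quadratic_ext F K)"

definition max_totally_real_subfield :: "complex set \<Rightarrow> complex set \<Rightarrow> bool" where
  "max_totally_real_subfield K F \<longleftrightarrow> is_subfield F \<and> F \<subseteq> K \<and> totally_real F \<and>
     (\<forall>F'. is_subfield F' \<and> F' \<subseteq> K \<and> totally_real F' \<longrightarrow> F' \<subseteq> F)"

definition ring_of_integers :: "complex set \<Rightarrow> complex set" where
  "ring_of_integers K = {x \<in> K. algebraic_int x}"

definition is_order :: "complex set \<Rightarrow> complex set \<Rightarrow> bool" where
  "is_order K R \<longleftrightarrow> R \<subseteq> K \<and> 1 \<in> R \<and>
     (\<forall>x\<in>R. \<forall>y\<in>R. x + y \<in> R \<and> x * y \<in> R \<and> - x \<in> R) \<and>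
     (\<exists>n v. int_basis n v R \<and> rat_basis n v K)"

definition conductor :: "complex set \<Rightarrow> complex set \<Rightarrow> complex set" where
  "conductor K R = {x \<in> K. \<forall>y \<in> ring_of_integers K. x * y \<in> R}"

definition is_row_HNF :: "int mat \<Rightarrow> bool" where
  "is_row_HNF A \<longleftrightarrow> (\<exists>r p. r \<le> dim_row A \<and>
     (\<forall>i. r \<le> i \<and> i < dim_row A \<longrightarrow> row A i = 0\<^sub>v (dim_col A)) \<and>
     (\<forall>i<r. p i < dim_col A \<and> A $$ (i, p i) > 0 \<and> (\<forall>j<p i. A $$ (i, j) = 0) \<and>
        (\<forall>i'<i. 0 \<le> A $$ (i', p i) \<and> A $$ (i', p i) < A $$ (i, p i))) \<and>
     (\<forall>i j. i < j \<and> j < r \<longrightarrow> p i < p j))"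

text \<open>The (2g)^2 x g matrix M obtained by stacking M_1, ..., M_{2g}; row j*2g+k of block j
  has entries b i j k.\<close>
definition stacked_matrix :: "nat \<Rightarrow> (nat \<Rightarrow> nat \<Rightarrow> nat \<Rightarrow> rat) \<Rightarrow> rat mat" where
  "stacked_matrix g b = mat ((2*g) * (2*g)) g (\<lambda>(r, i). b i (r div (2*g)) (r mod (2*g)))"

end

theory Submission
  imports Defs "Jordan_Normal_Form.Determinant"
begin


lemma subfield_of_nat: "is_subfield K \<Longrightarrow> of_nat n \<in> K"
  by (induction n) (auto simp: is_subfield_def)

lemma subfield_of_int: "is_subfield K \<Longrightarrow> of_int z \<in> K"
proof (cases "z \<ge> 0")
  case True
  assume "is_subfield K"
  then show ?thesis using True subfield_of_nat[of K "nat z"] by simp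
next
  case False
  assume K: "is_subfield K"
  have "of_int z = - (of_nat (nat (-z)) :: complex)" using False by simp
  then show ?thesis using K subfield_of_nat[of K "nat (-z)"] unfolding is_subfield_def by metis
qed

lemma subfield_of_rat: assumes K: "is_subfield K" shows "of_rat q \<in> K"
proof -
  obtain a b where q: "q = of_int a / of_int b" by (metis Fract_of_int_quotient Rat_cases)
  have "of_rat q = (of_int a :: complex) * inverse (of_int b)"
    by (simp add: q divide_inverse of_rat_mult of_rat_inverse)
  then show ?thesis using K subfield_of_int[OF K] unfolding is_subfield_def by metis
qed

lemma subfield_sum: assumes K: "is_subfield K" shows "(\<And>i. i \<in> A \<Longrightarrow> f i \<in> K) \<Longrightarrow> sum f A \<in> K"
proof (induction A rule: infinite_finite_induct)
  case (infinite A) then show ?case using K by (simp add: is_subfield_def)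
next
  case empty then show ?case using K by (simp add: is_subfield_def)
next
  case (insert x F) then show ?case using K by (simp add: is_subfield_def)
qed

lemma subfield_mult: "is_subfield K \<Longrightarrow> x \<in> K \<Longrightarrow> y \<in> K \<Longrightarrow> x * y \<in> K"
  by (simp add: is_subfield_def)

lemma common_denom: "finite (S :: rat set) \<Longrightarrow> \<exists>D::int. D \<noteq> 0 \<and> (\<forall>q\<in>S. of_int D * q \<in> \<int>)"
proof (induction S rule: finite_induct)
  case empty then show ?case by (intro exI[of _ 1]) auto
next
  case (insert x F)
  then obtain D where D: "D \<noteq> 0" "\<forall>q\<in>F. of_int D * q \<in> \<int>" by blast
  obtain a b where x: "quotient_of x = (a, b)" by (cases "quotient_of x")
  have b: "b > 0" using x quotient_of_denom_pos by blast
  have xe: "x = of_int a / of_int b" using x quotient_of_div by blast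
  have "of_int (D * b) * x = of_int (D * a)" using b by (simp add: xe)
  moreover have "of_int (D * b) * q \<in> \<int>" if "q \<in> F" for q
  proof -
    have "of_int (D * b) * q = of_int b * (of_int D * q)" by simp
    then show ?thesis using D that by (metis Ints_mult Ints_of_int)
  qed
  moreover have "of_int (D * b) * x \<in> \<int>" using calculation(1) by (metis Ints_of_int)
  ultimately show ?case using D b by (intro exI[of _ "D * b"]) auto
qed

lemma Ints_floor_eq: "(y::'a::floor_ceiling) \<in> \<int> \<Longrightarrow> of_int \<lfloor>y\<rfloor> = y"
  by (metis Ints_cases floor_of_int)

lemma rat_indep:
  assumes tau: "int_basis n \<tau> R" and s: "(\<Sum>k<n. of_rat (q k) * \<tau> k) = 0" and k: "k < n"
  shows "q k = 0"
proof -
  obtain D :: int where D: "D \<noteq> 0" "\<forall>x\<in>q ` {..<n}. of_int D * x \<in> \<int>"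
    using common_denom[of "q ` {..<n}"] by auto
  define e where "e k = \<lfloor>of_int D * q k\<rfloor>" for k
  have e: "of_int (e k) = of_int D * q k" if "k < n" for k
    using D that unfolding e_def by (intro Ints_floor_eq) auto
  have "(\<Sum>k<n. of_int (e k) * \<tau> k) = (\<Sum>k<n. of_int D * (of_rat (q k) * \<tau> k))"
  proof (rule sum.cong)
    fix k assume "k \<in> {..<n}"
    then have "(of_int (e k) :: complex) = of_rat (of_int (e k))" by simp
    also have "\<dots> = of_rat (of_int D * q k)" using e \<open>k \<in> {..<n}\<close> by simp
    finally show "of_int (e k) * \<tau> k = of_int D * (of_rat (q k) * \<tau> k)"
      by (simp add: of_rat_mult)
  qed simp
  also have "\<dots> = 0" using s by (simp add: sum_distrib_left[symmetric])
  finally have "e k = 0" using tau k unfolding int_basis_def by blast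
  then have "of_int D * q k = 0" using e[OF k] by simp
  then show ?thesis using D by simp
qed

lemma mv_index: "A \<in> carrier_mat nr nc \<Longrightarrow> v \<in> carrier_vec nc \<Longrightarrow> i < nr \<Longrightarrow>
   (A *\<^sub>v v) $ i = (\<Sum>j<nc. A $$ (i,j) * v $ j)"
  by (simp add: scalar_prod_def row_def atLeast0LessThan)

lemma mv_zero: "(A :: 'a :: semiring_0 mat) \<in> carrier_mat nr nc \<Longrightarrow> A *\<^sub>v 0\<^sub>v nc = 0\<^sub>v nr"
  by (intro eq_vecI) (auto simp: mv_index)



theorem mainTheorem1:
  fixes K F R :: "complex set" and g :: nat
    and \<alpha> \<tau> \<omega> :: "nat \<Rightarrow> complex"
    and b :: "nat \<Rightarrow> nat \<Rightarrow> nat \<Rightarrow> rat"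
    and M :: "rat mat" and d :: int and N U Hf H :: "int mat"
  assumes cm: "cm_field K"
    and deg: "\<exists>v. rat_basis (2*g) v K"
    and F: "max_totally_real_subfield K F"
    and ord: "is_order K R"
    and OF: "R \<inter> F = ring_of_integers F"
    and \<alpha>: "int_basis g \<alpha> (ring_of_integers F)"
    and \<tau>: "int_basis (2*g) \<tau> R"
    and \<omega>: "int_basis (2*g) \<omega> (ring_of_integers K)"
    and b: "\<forall>i<g. \<forall>j<2*g. \<alpha> i * \<omega> j = (\<Sum>k<2*g. of_rat (b i j k) * \<tau> k)"
    and M: "M = stacked_matrix g b"
    and d: "d = Gcd {d'::int. \<forall>r<dim_row M. \<forall>i<dim_col M. of_int d' * M $$ (r, i) \<in> \<int>}"
    and N: "N \<in> carrier_mat (dim_row M) (dim_col M)"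
    and NdM: "map_mat rat_of_int N = of_int d \<cdot>\<^sub>m M"
    and U: "U \<in> carrier_mat (dim_row M) (dim_row M)" "invertible_mat U"
    and Hf: "Hf = U * N" "is_row_HNF Hf"
    and H: "H = mat (card {i. i < dim_row Hf \<and> row Hf i \<noteq> 0\<^sub>v (dim_col Hf)}) (dim_col Hf)
                   (\<lambda>(i, j). Hf $$ (i, j))"
  shows "H \<in> carrier_mat g g \<and> invertible_mat (map_mat rat_of_int H) \<and>
    (\<forall>Hinv. Hinv \<in> carrier_mat g g \<and> map_mat rat_of_int H * Hinv = 1\<^sub>m g
        \<and> Hinv * map_mat rat_of_int H = 1\<^sub>m g \<longrightarrow>
      conductor K R \<inter> ring_of_integers F =
        int_span g (\<lambda>i. \<Sum>l<g. \<alpha> l * of_rat (of_int d * Hinv $$ (l, i))))"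
proof -
  define n where "n = 2*g"
  have dimM: "dim_row M = n*n" "dim_col M = g" using M by (simp_all add: stacked_matrix_def n_def)
  have Mij: "M $$ (r,i) = b i (r div n) (r mod n)" if "r < n*n" "i < g" for r i
    using that M by (simp add: stacked_matrix_def n_def)
  have Kf: "is_subfield K" using cm unfolding cm_field_def number_field_def by blast
  have Ff: "is_subfield F" "F \<subseteq> K" using F unfolding max_totally_real_subfield_def by blast+
  have \<alpha>F: "\<alpha> i \<in> F" if "i < g" for i using \<alpha> that unfolding int_basis_def ring_of_integers_def by blast
  have \<omega>K: "\<omega> j \<in> ring_of_integers K" if "j < n" for j using \<omega> that unfolding int_basis_def n_def by blast
  have oneK: "1 \<in> ring_of_integers K" using Kf unfolding ring_of_integers_def is_subfield_def by auto
  obtain e1 where e1: "1 = (\<Sum>j<n. of_int (e1 j) * \<omega> j)"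
    using \<omega> oneK unfolding int_basis_def int_span_def n_def by blast
  define xof where "xof cv = (\<Sum>l<g. \<alpha> l * of_rat (cv $ l))" for cv :: "rat vec"
  have Mv: "(M *\<^sub>v cv) $ (j*n+k) = (\<Sum>l<g. b l j k * cv $ l)" if "cv \<in> carrier_vec g" "j < n" "k < n" for cv j k
  proof -
    have "j*n+k < (j+1)*n" using that by simp
    also have "(j+1)*n \<le> n*n" using that by (intro mult_le_mono1) simp
    finally have r: "j*n+k < n*n" .
    have "(M *\<^sub>v cv) $ (j*n+k) = (\<Sum>l<g. M $$ (j*n+k, l) * cv $ l)"
      using that r dimM by (simp add: scalar_prod_def row_def atLeast0LessThan)
    also have "\<dots> = (\<Sum>l<g. b l j k * cv $ l)" using r that by (simp add: Mij)
    finally show ?thesis .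
  qed
  have L1: "xof cv * \<omega> j = (\<Sum>k<n. of_rat ((M *\<^sub>v cv) $ (j*n+k)) * \<tau> k)" if "cv \<in> carrier_vec g" "j < n" for cv j
  proof -
    have "xof cv * \<omega> j = (\<Sum>l<g. of_rat (cv $ l) * (\<alpha> l * \<omega> j))"
      unfolding xof_def sum_distrib_right by (simp add: ac_simps)
    also have "\<dots> = (\<Sum>l<g. of_rat (cv $ l) * (\<Sum>k<n. of_rat (b l j k) * \<tau> k))"
      using b that n_def by simp
    also have "\<dots> = (\<Sum>k<n. (\<Sum>l<g. of_rat (b l j k * cv $ l)) * \<tau> k)"
      unfolding sum_distrib_left sum_distrib_right by (subst sum.swap) (simp add: of_rat_mult ac_simps)
    also have "\<dots> = (\<Sum>k<n. of_rat ((M *\<^sub>v cv) $ (j*n+k)) * \<tau> k)"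
      using that by (simp add: Mv of_rat_sum)
    finally show ?thesis .
  qed
  have \<tau>R: "(\<exists>e. y = (\<Sum>k<n. of_int (e k) * \<tau> k)) \<longleftrightarrow> y \<in> R" for y
    using \<tau> unfolding int_basis_def int_span_def n_def by blast
  have xK: "xof cv \<in> K" for cv
    unfolding xof_def using Ff \<alpha>F Kf
    by (intro subfield_sum[OF Kf] subfield_mult[OF Kf] subfield_of_rat[OF Kf]) auto
  have xF: "xof cv \<in> F" for cv
    unfolding xof_def using Ff \<alpha>F
    by (intro subfield_sum[OF Ff(1)] subfield_mult[OF Ff(1)] subfield_of_rat[OF Ff(1)]) auto
  have claimA: "xof cv \<in> conductor K R \<longleftrightarrow> (\<forall>s<n*n. (M *\<^sub>v cv) $ s \<in> \<int>)" if cv: "cv \<in> carrier_vec g" for cv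
  proof
    assume xc: "xof cv \<in> conductor K R"
    show "\<forall>s<n*n. (M *\<^sub>v cv) $ s \<in> \<int>"
    proof (intro allI impI)
      fix s assume s: "s < n*n"
      define j k where "j = s div n" "k = s mod n"
      have n0: "n > 0" using s by (cases n) auto
      have jk: "j < n" "k < n" "s = j*n+k" using s n0 unfolding j_k_def
        by (auto simp: less_mult_imp_div_less mult.commute)
      have "xof cv * \<omega> j \<in> R" using xc \<omega>K[OF jk(1)] unfolding conductor_def by blast
      then obtain e where e: "xof cv * \<omega> j = (\<Sum>k<n. of_int (e k) * \<tau> k)" using \<tau>R by blast
      have "(\<Sum>k<n. of_rat ((M *\<^sub>v cv) $ (j*n+k) - of_int (e k)) * \<tau> k) = 0"
        using e L1[OF cv jk(1)] by (simp add: of_rat_diff algebra_simps sum_subtractf)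
      then have "(M *\<^sub>v cv) $ (j*n+k) - of_int (e k) = 0"
        using rat_indep[OF \<tau>[folded n_def], of "\<lambda>k. (M *\<^sub>v cv) $ (j*n+k) - of_int (e k)" k] jk(2) by blast
      then show "(M *\<^sub>v cv) $ s \<in> \<int>" using jk(3)
        by (metis Ints_of_int eq_iff_diff_eq_0)
    qed
  next
    assume zi: "\<forall>s<n*n. (M *\<^sub>v cv) $ s \<in> \<int>"
    show "xof cv \<in> conductor K R" unfolding conductor_def
    proof (intro CollectI conjI ballI xK)
      fix y assume "y \<in> ring_of_integers K"
      then obtain e where e: "y = (\<Sum>j<n. of_int (e j) * \<omega> j)"
        using \<omega> unfolding int_basis_def int_span_def n_def by blast
      define z where "z j k = \<lfloor>(M *\<^sub>v cv) $ (j*n+k)\<rfloor>" for j k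
      have z: "of_rat ((M *\<^sub>v cv) $ (j*n+k)) = (of_int (z j k) :: complex)" if "j < n" "k < n" for j k
      proof -
        have "j*n+k < (j+1)*n" using that by simp
        also have "(j+1)*n \<le> n*n" using that by (intro mult_le_mono1) simp
        finally have r: "j*n+k < n*n" .
        have "(M *\<^sub>v cv) $ (j*n+k) = of_int (z j k)" unfolding z_def using zi r Ints_floor_eq by metis
        then show ?thesis by simp
      qed
      have "xof cv * y = (\<Sum>j<n. of_int (e j) * (xof cv * \<omega> j))"
        unfolding e sum_distrib_left by (simp add: ac_simps)
      also have "\<dots> = (\<Sum>j<n. of_int (e j) * (\<Sum>k<n. of_int (z j k) * \<tau> k))"
        using L1[OF cv] z by (intro sum.cong refl) simp
      also have "\<dots> = (\<Sum>k<n. of_int (\<Sum>j<n. e j * z j k) * \<tau> k)"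
        unfolding sum_distrib_left sum_distrib_right of_int_sum of_int_mult by (subst sum.swap) (simp add: ac_simps)
      finally have eq: "xof cv * y = (\<Sum>k<n. of_int (\<Sum>j<n. e j * z j k) * \<tau> k)" .
      show "xof cv * y \<in> R" unfolding \<tau>R[symmetric]
        by (rule exI[of _ "\<lambda>k. \<Sum>j<n. e j * z j k"]) (rule eq)
    qed
  qed
  have Ncar: "N \<in> carrier_mat (n*n) g" using N dimM by simp
  have Ucar: "U \<in> carrier_mat (n*n) (n*n)" using U dimM by simp
  obtain Ui where Ui: "Ui \<in> carrier_mat (n*n) (n*n)" "U * Ui = 1\<^sub>m (n*n)" "Ui * U = 1\<^sub>m (n*n)"
  proof -
    from U(2) obtain B where B: "U * B = 1\<^sub>m (dim_row U)" "B * U = 1\<^sub>m (dim_row B)"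
      unfolding invertible_mat_def inverts_mat_def by blast
    have "dim_col B = n*n" using arg_cong[OF B(1), of dim_col] Ucar by simp
    moreover have "dim_row B = n*n" using arg_cong[OF B(2), of dim_col] Ucar by simp
    ultimately show ?thesis using that[of B] B Ucar by auto
  qed
  have Hfcar: "Hf \<in> carrier_mat (n*n) g" using Hf(1) Ucar Ncar by simp
  have d0: "d \<noteq> 0"
  proof -
    have fin: "{M $$ (r,i) | r i. r < n*n \<and> i < g} = (\<lambda>(r,i). M $$ (r,i)) ` ({..<n*n} \<times> {..<g})" by auto
    have "finite {M $$ (r,i) | r i. r < n*n \<and> i < g}" unfolding fin by simp
    from common_denom[OF this] obtain D :: int where D: "D \<noteq> 0" "\<forall>q\<in>{M $$ (r,i) | r i. r < n*n \<and> i < g}. of_int D * q \<in> \<int>"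
      by blast
    define S where "S = {d'::int. \<forall>r<dim_row M. \<forall>i<dim_col M. of_int d' * M $$ (r, i) \<in> \<int>}"
    have "D \<in> S" unfolding S_def
    proof (intro CollectI allI impI)
      fix r i assume "r < dim_row M" "i < dim_col M"
      then have "M $$ (r,i) \<in> {M $$ (r,i) | r i. r < n*n \<and> i < g}" using dimM by auto
      then show "of_int D * M $$ (r, i) \<in> \<int>" using D(2) by blast
    qed
    then have "Gcd S \<noteq> 0" using D(1) Gcd_0_iff[of S] by blast
    then show ?thesis unfolding d S_def .
  qed
  have jnk: "j*n+k < n*n" if "j < n" "k < n" for j k
  proof -
    have "j*n+k < (j+1)*n" using that by simp
    also have "(j+1)*n \<le> n*n" using that by (intro mult_le_mono1) simp
    finally show ?thesis .
  qed
  have Mcar: "M \<in> carrier_mat (n*n) g" unfolding carrier_mat_def using dimM by blast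
  have NM: "(map_mat rat_of_int N *\<^sub>v cv) $ s = of_int d * (M *\<^sub>v cv) $ s"
    if "cv \<in> carrier_vec g" "s < n*n" for cv s
  proof -
    have c: "of_int d \<cdot>\<^sub>m M \<in> carrier_mat (n*n) g" using Mcar by simp
    have "(map_mat rat_of_int N *\<^sub>v cv) $ s = ((of_int d \<cdot>\<^sub>m M) *\<^sub>v cv) $ s" by (simp only: NdM)
    also have "\<dots> = (\<Sum>j<g. (of_int d \<cdot>\<^sub>m M) $$ (s,j) * cv $ j)" by (rule mv_index[OF c that(1) that(2)])
    also have "\<dots> = (\<Sum>j<g. of_int d * (M $$ (s,j) * cv $ j))" using that Mcar by (intro sum.cong refl) (simp add: carrier_matD)
    also have "\<dots> = of_int d * (\<Sum>j<g. M $$ (s,j) * cv $ j)" by (simp only: sum_distrib_left)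
    also have "\<dots> = of_int d * (M *\<^sub>v cv) $ s" by (simp only: mv_index[OF Mcar that(1) that(2)])
    finally show ?thesis .
  qed
  have kern: "v = 0\<^sub>v g" if v: "v \<in> carrier_vec g" and hv: "Hf *\<^sub>v v = 0\<^sub>v (n*n)" for v :: "int vec"
  proof -
    have Nvc: "N *\<^sub>v v \<in> carrier_vec (n*n)" using Ncar v by simp
    have "N *\<^sub>v v = (Ui * U) *\<^sub>v (N *\<^sub>v v)" using Ui Nvc by simp
    also have "\<dots> = Ui *\<^sub>v (U *\<^sub>v (N *\<^sub>v v))" using Ui(1) Ucar Nvc by (simp add: assoc_mult_mat_vec)
    also have "U *\<^sub>v (N *\<^sub>v v) = Hf *\<^sub>v v" using Hf(1) Ucar Ncar v by (simp add: assoc_mult_mat_vec)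
    also have "Ui *\<^sub>v (Hf *\<^sub>v v) = 0\<^sub>v (n*n)" unfolding hv by (rule mv_zero[OF Ui(1)])
    finally have Nv: "N *\<^sub>v v = 0\<^sub>v (n*n)" .
    define vq where "vq = map_vec rat_of_int v"
    have vq: "vq \<in> carrier_vec g" using v unfolding vq_def by simp
    have Mvq: "(M *\<^sub>v vq) $ s = 0" if s: "s < n*n" for s
    proof -
      have "(map_mat rat_of_int N *\<^sub>v vq) $ s = of_int ((N *\<^sub>v v) $ s)"
      proof -
        have "map_mat rat_of_int N *\<^sub>v vq = map_vec rat_of_int (N *\<^sub>v v)"
          unfolding vq_def by (rule of_int_hom.mult_mat_vec_hom[OF Ncar v, symmetric])
        then show ?thesis using s Ncar by simp
      qed
      also have "\<dots> = 0" using Nv s by simp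
      finally show ?thesis using NM[OF vq s] d0 by simp
    qed
    have xj: "xof vq * \<omega> j = 0" if "j < n" for j
      using L1[OF vq that] Mvq jnk that by simp
    have "xof vq = xof vq * 1" by simp
    also have "\<dots> = (\<Sum>j<n. of_int (e1 j) * (xof vq * \<omega> j))"
      by (subst e1) (simp add: sum_distrib_left ac_simps)
    also have "\<dots> = 0"
    proof (rule sum.neutral, rule ballI)
      fix j assume "j \<in> {..<n}"
      then have "xof vq * \<omega> j = 0" by (intro xj) simp
      then show "of_int (e1 j) * (xof vq * \<omega> j) = 0" by (simp only: mult_zero_right)
    qed
    finally have x0: "xof vq = 0" .
    have "xof vq = (\<Sum>l<g. of_int (v $ l) * \<alpha> l)"
      unfolding xof_def vq_def using v by (intro sum.cong refl) (simp add: ac_simps)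
    then have "(\<Sum>l<g. of_int (v $ l) * \<alpha> l) = 0" using x0 by simp
    moreover have "\<forall>c::nat\<Rightarrow>int. (\<Sum>i<g. of_int (c i) * \<alpha> i) = 0 \<longrightarrow> (\<forall>i<g. c i = 0)"
      using \<alpha> unfolding int_basis_def by blast
    ultimately have "\<forall>l<g. v $ l = 0" by (rule mp[OF spec[of _ "\<lambda>l. v $ l"], rotated])
    then show ?thesis using v by (intro eq_vecI) auto
  qed
  have dHf: "dim_row Hf = n*n" "dim_col Hf = g" using Hfcar by auto
  from Hf(2) obtain r p where h1: "r \<le> dim_row Hf"
     and h2: "\<forall>i. r \<le> i \<and> i < dim_row Hf \<longrightarrow> row Hf i = 0\<^sub>v (dim_col Hf)"
     and h3: "\<forall>i<r. p i < dim_col Hf \<and> Hf $$ (i, p i) > 0 \<and> (\<forall>j<p i. Hf $$ (i, j) = 0) \<and>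
        (\<forall>i'<i. 0 \<le> Hf $$ (i', p i) \<and> Hf $$ (i', p i) < Hf $$ (i, p i))"
     and h4: "\<forall>i j. i < j \<and> j < r \<longrightarrow> p i < p j"
    unfolding is_row_HNF_def by blast
  have hnf1: "r \<le> n*n" using h1 dHf by simp
  have hnf2: "row Hf i = 0\<^sub>v g" if "r \<le> i" "i < n*n" for i using h2 that dHf by simp
  have hnf3: "p i < g \<and> Hf $$ (i, p i) > 0" if "i < r" for i using h3 that dHf by simp
  have hnf4: "p i < p j" if "i < j" "j < r" for i j using h4 that by blast
  have nzset: "{i. i < dim_row Hf \<and> row Hf i \<noteq> 0\<^sub>v (dim_col Hf)} = {..<r}"
  proof (intro equalityI subsetI)
    fix i assume "i \<in> {i. i < dim_row Hf \<and> row Hf i \<noteq> 0\<^sub>v (dim_col Hf)}"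
    then show "i \<in> {..<r}" using hnf2[of i] dHf by (cases "r \<le> i") auto
  next
    fix i assume i: "i \<in> {..<r}"
    then have ir: "i < r" "i < n*n" using hnf1 by auto
    have "row Hf i $ p i = Hf $$ (i, p i)" using hnf3[OF ir(1)] ir dHf by simp
    then have "row Hf i $ p i \<noteq> 0" using hnf3[OF ir(1)] by simp
    then have "row Hf i \<noteq> 0\<^sub>v g" using hnf3[OF ir(1)] by auto
    then show "i \<in> {i. i < dim_row Hf \<and> row Hf i \<noteq> 0\<^sub>v (dim_col Hf)}" using ir dHf by auto
  qed
  have rg: "r \<le> g"
  proof -
    have "inj_on p {..<r}"
    proof (rule inj_onI)
      fix i j assume "i \<in> {..<r}" "j \<in> {..<r}" "p i = p j"
      then show "i = j" using hnf4[of i j] hnf4[of j i] by (cases i j rule: linorder_cases) auto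
    qed
    moreover have "p ` {..<r} \<subseteq> {..<g}" using hnf3 by auto
    ultimately have "card {..<r} \<le> card {..<g}" by (intro card_inj_on_le) auto
    then show ?thesis by simp
  qed
  define P where "P = mat g g (\<lambda>(i,j). if i < r then Hf $$ (i,j) else 0)"
  have Pcar: "P \<in> carrier_mat g g" unfolding P_def by simp
  have Hf0: "Hf $$ (i,j) = 0" if "r \<le> i" "i < n*n" "j < g" for i j
  proof -
    have "row Hf i $ j = 0" using hnf2[OF that(1,2)] that(3) by simp
    then show ?thesis using that dHf by simp
  qed
  have Pk: "v = 0\<^sub>v g" if v: "v \<in> carrier_vec g" and pv: "P *\<^sub>v v = 0\<^sub>v g" for v
  proof (rule kern[OF v], rule eq_vecI)
    fix i assume "i < dim_vec (0\<^sub>v (n*n) :: int vec)"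
    then have i: "i < n*n" by simp
    show "(Hf *\<^sub>v v) $ i = 0\<^sub>v (n*n) $ i"
    proof (cases "i < r")
      case True
      then have ig: "i < g" using rg by simp
      have "(Hf *\<^sub>v v) $ i = (\<Sum>j<g. Hf $$ (i,j) * v $ j)" by (rule mv_index[OF Hfcar v i])
      also have "\<dots> = (\<Sum>j<g. P $$ (i,j) * v $ j)" using True ig unfolding P_def by (intro sum.cong refl) simp
      also have "\<dots> = (P *\<^sub>v v) $ i" by (rule mv_index[OF Pcar v ig, symmetric])
      finally show ?thesis using pv ig i by simp
    next
      case False
      have "(Hf *\<^sub>v v) $ i = (\<Sum>j<g. Hf $$ (i,j) * v $ j)" by (rule mv_index[OF Hfcar v i])
      also have "\<dots> = 0" using Hf0 False i by (intro sum.neutral) simp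
      finally show ?thesis using i by simp
    qed
  qed (use dHf in simp)
  have detP: "det P \<noteq> 0" using det_0_iff_vec_prod_zero[OF Pcar] Pk by blast
  have rg2: "r = g"
  proof (rule ccontr)
    assume "r \<noteq> g"
    then have rlt: "r < g" using rg by simp
    define k where "k = g - 1"
    have k: "r \<le> k" "k < g" using rlt unfolding k_def by auto
    have tc: "transpose_mat P \<in> carrier_mat g g" using Pcar by simp
    have "transpose_mat P *\<^sub>v unit_vec g k = 0\<^sub>v g"
    proof (rule eq_vecI)
      fix i assume "i < dim_vec (0\<^sub>v g :: int vec)"
      then have i: "i < g" by simp
      have "(transpose_mat P *\<^sub>v unit_vec g k) $ i = (\<Sum>j<g. transpose_mat P $$ (i,j) * unit_vec g k $ j)"
        by (rule mv_index[OF tc _ i]) simp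
      also have "\<dots> = 0" using k i unfolding P_def by (intro sum.neutral) auto
      finally show "(transpose_mat P *\<^sub>v unit_vec g k) $ i = 0\<^sub>v g $ i" using i by simp
    qed (use Pcar in simp)
    then have "det (transpose_mat P) = 0" using det_0_iff_vec_prod_zero[OF tc] k
      by (metis unit_vec_carrier unit_vec_nonzero)
    then show False using detP det_transpose[OF Pcar] by simp
  qed
  have cardnz: "card {i. i < dim_row Hf \<and> row Hf i \<noteq> 0\<^sub>v (dim_col Hf)} = g" unfolding nzset rg2 by simp
  have HP: "H = P" unfolding H cardnz P_def rg2 using dHf by (intro eq_matI) auto
  have Hcar: "H \<in> carrier_mat g g" using HP Pcar by simp
  have Hinvb: "invertible_mat (map_mat rat_of_int H)"
  proof -
    have c: "map_mat rat_of_int H \<in> carrier_mat g g" using Hcar by simp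
    have "det (map_mat rat_of_int H) \<noteq> 0" using HP detP by (simp add: of_int_hom.hom_det)
    from det_non_zero_imp_unit[OF c this, of "()"]
    obtain B where "B \<in> carrier_mat g g" "B * map_mat rat_of_int H = 1\<^sub>m g" "map_mat rat_of_int H * B = 1\<^sub>m g"
      unfolding Units_def ring_mat_def by auto
    then show ?thesis using c unfolding invertible_mat_def inverts_mat_def square_mat.simps by auto
  qed
  define Hq where "Hq = map_mat rat_of_int H"
  define Hfq where "Hfq = map_mat rat_of_int Hf"
  define Nq where "Nq = map_mat rat_of_int N"
  define Uq where "Uq = map_mat rat_of_int U"
  define Uiq where "Uiq = map_mat rat_of_int Ui"
  have Hqc: "Hq \<in> carrier_mat g g" unfolding Hq_def using Hcar by simp
  have Hfqc: "Hfq \<in> carrier_mat (n*n) g" unfolding Hfq_def using Hfcar by simp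
  have Nqc: "Nq \<in> carrier_mat (n*n) g" unfolding Nq_def using Ncar by simp
  have Uqc: "Uq \<in> carrier_mat (n*n) (n*n)" unfolding Uq_def using Ucar by simp
  have Uiqc: "Uiq \<in> carrier_mat (n*n) (n*n)" unfolding Uiq_def using Ui by simp
  have HfUN: "Hfq = Uq * Nq" unfolding Hfq_def Uq_def Nq_def Hf(1) by (rule of_int_hom.mat_hom_mult[OF Ucar Ncar])
  have NUiHf: "Nq = Uiq * Hfq"
  proof -
    have "N = (Ui * U) * N" using Ui Ncar by simp
    also have "\<dots> = Ui * Hf" using Ui(1) Ucar Ncar Hf(1) by (simp add: assoc_mult_mat)
    finally have "N = Ui * Hf" .
    then show ?thesis unfolding Hfq_def Uiq_def Nq_def using of_int_hom.mat_hom_mult[OF Ui(1) Hfcar] by simp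
  qed
  have HqHfq: "(Hq *\<^sub>v cv) $ i = (Hfq *\<^sub>v cv) $ i" if "cv \<in> carrier_vec g" "i < g" for cv i
  proof -
    have ig: "i < n*n" using that rg2 hnf1 by simp
    have "(Hq *\<^sub>v cv) $ i = (\<Sum>j<g. Hq $$ (i,j) * cv $ j)" by (rule mv_index[OF Hqc that])
    also have "\<dots> = (\<Sum>j<g. Hfq $$ (i,j) * cv $ j)"
      using that ig Hfcar unfolding Hq_def Hfq_def HP P_def rg2 by (intro sum.cong refl) simp
    also have "\<dots> = (Hfq *\<^sub>v cv) $ i" by (rule mv_index[OF Hfqc that(1) ig, symmetric])
    finally show ?thesis .
  qed
  define \<beta> where "\<beta> Hinv' i = (\<Sum>l<g. \<alpha> l * of_rat (of_int d * Hinv' $$ (l, i)))" for Hinv' :: "rat mat" and i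
  have betax: "xof cv = (\<Sum>i<g. of_int (z i) * \<beta> Hinv' i)"
    if cvl: "\<And>l. l < g \<Longrightarrow> cv $ l = (\<Sum>i<g. of_int d * Hinv' $$ (l,i) * of_int (z i))" for cv Hinv' z
  proof -
    have "xof cv = (\<Sum>l<g. \<alpha> l * of_rat (\<Sum>i<g. of_int d * Hinv' $$ (l,i) * of_int (z i)))"
      unfolding xof_def using cvl by (intro sum.cong refl) simp
    also have "\<dots> = (\<Sum>l<g. \<Sum>i<g. of_int (z i) * (\<alpha> l * of_rat (of_int d * Hinv' $$ (l, i))))"
      by (simp add: of_rat_sum of_rat_mult sum_distrib_left ac_simps)
    also have "\<dots> = (\<Sum>i<g. of_int (z i) * \<beta> Hinv' i)"
      unfolding \<beta>_def sum_distrib_left by (rule sum.swap)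
    finally show ?thesis .
  qed
  show ?thesis
  proof (intro conjI allI impI Hcar Hinvb)
    fix Hinv assume hi: "Hinv \<in> carrier_mat g g \<and> map_mat rat_of_int H * Hinv = 1\<^sub>m g \<and> Hinv * map_mat rat_of_int H = 1\<^sub>m g"
    then have Hic: "Hinv \<in> carrier_mat g g" and HHi: "Hq * Hinv = 1\<^sub>m g" and HiH: "Hinv * Hq = 1\<^sub>m g"
      unfolding Hq_def by auto
    have bdef: "(\<lambda>i. \<Sum>l<g. \<alpha> l * of_rat (of_int d * Hinv $$ (l, i))) = \<beta> Hinv"
      unfolding \<beta>_def by simp
    show "conductor K R \<inter> ring_of_integers F = int_span g (\<lambda>i. \<Sum>l<g. \<alpha> l * of_rat (of_int d * Hinv $$ (l, i)))"
      unfolding bdef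
    proof (intro equalityI subsetI)
      fix x assume x: "x \<in> conductor K R \<inter> ring_of_integers F"
      then obtain c where c: "x = (\<Sum>i<g. of_int (c i) * \<alpha> i)"
        using \<alpha> unfolding int_basis_def int_span_def by blast
      define cv where "cv = vec g (\<lambda>i. rat_of_int (c i))"
      have cvc: "cv \<in> carrier_vec g" unfolding cv_def by simp
      have xcv: "xof cv = x" unfolding c xof_def cv_def by (intro sum.cong refl) (simp add: ac_simps)
      have Mint: "\<forall>s<n*n. (M *\<^sub>v cv) $ s \<in> \<int>" using claimA[OF cvc] x xcv by simp
      define z where "z t = \<lfloor>\<Sum>s<n*n. of_int (U $$ (t,s)) * (M *\<^sub>v cv) $ s\<rfloor>" for t
      have zt: "(Hfq *\<^sub>v cv) $ t = of_int d * of_int (z t)" if t: "t < n*n" for t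
      proof -
        have Nqv: "Nq *\<^sub>v cv \<in> carrier_vec (n*n)" using Nqc cvc by simp
        have "(Hfq *\<^sub>v cv) $ t = (Uq *\<^sub>v (Nq *\<^sub>v cv)) $ t" unfolding HfUN using Uqc Nqc cvc by simp
        also have "\<dots> = (\<Sum>s<n*n. Uq $$ (t,s) * (Nq *\<^sub>v cv) $ s)" by (rule mv_index[OF Uqc Nqv t])
        also have "\<dots> = (\<Sum>s<n*n. of_int d * (of_int (U $$ (t,s)) * (M *\<^sub>v cv) $ s))"
          using t Ucar NM[OF cvc] unfolding Uq_def Nq_def by (intro sum.cong refl) simp
        also have "\<dots> = of_int d * (\<Sum>s<n*n. of_int (U $$ (t,s)) * (M *\<^sub>v cv) $ s)"
          by (simp only: sum_distrib_left)
        also have "(\<Sum>s<n*n. of_int (U $$ (t,s)) * (M *\<^sub>v cv) $ s) = of_int (z t)"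
          unfolding z_def using Mint by (intro Ints_floor_eq[symmetric] Ints_sum Ints_mult) auto
        finally show ?thesis .
      qed
      define zq where "zq = vec g (\<lambda>i. rat_of_int (z i))"
      have Hcv: "Hq *\<^sub>v cv = of_int d \<cdot>\<^sub>v zq"
      proof (rule eq_vecI)
        fix i assume "i < dim_vec (of_int d \<cdot>\<^sub>v zq)"
        then have i: "i < g" unfolding zq_def by simp
        then have "i < n*n" using rg2 hnf1 by simp
        then show "(Hq *\<^sub>v cv) $ i = (of_int d \<cdot>\<^sub>v zq) $ i"
          using HqHfq[OF cvc i] zt i unfolding zq_def by simp
      qed (use Hqc zq_def in simp)
      have "cv = (Hinv * Hq) *\<^sub>v cv" using HiH cvc by simp
      also have "\<dots> = Hinv *\<^sub>v (of_int d \<cdot>\<^sub>v zq)" using Hic Hqc cvc Hcv by (simp add: assoc_mult_mat_vec)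
      finally have cvH: "cv = Hinv *\<^sub>v (of_int d \<cdot>\<^sub>v zq)" .
      have "xof cv = (\<Sum>i<g. of_int (z i) * \<beta> Hinv i)"
      proof (rule betax)
        fix l assume l: "l < g"
        have zc: "of_int d \<cdot>\<^sub>v zq \<in> carrier_vec g" unfolding zq_def by simp
        have "cv $ l = (\<Sum>i<g. Hinv $$ (l,i) * (of_int d \<cdot>\<^sub>v zq) $ i)"
          by (subst cvH) (rule mv_index[OF Hic zc l])
        also have "\<dots> = (\<Sum>i<g. of_int d * Hinv $$ (l,i) * of_int (z i))"
          unfolding zq_def by (intro sum.cong refl) simp
        finally show "cv $ l = (\<Sum>i<g. of_int d * Hinv $$ (l,i) * of_int (z i))" .
      qed
      then show "x \<in> int_span g (\<beta> Hinv)" unfolding xcv int_span_def by blast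
    next
      fix y assume "y \<in> int_span g (\<beta> Hinv)"
      then obtain z where y: "y = (\<Sum>i<g. of_int (z i) * \<beta> Hinv i)" unfolding int_span_def by blast
      define zq where "zq = vec g (\<lambda>i. rat_of_int (z i))"
      have zc: "of_int d \<cdot>\<^sub>v zq \<in> carrier_vec g" unfolding zq_def by simp
      define cv where "cv = Hinv *\<^sub>v (of_int d \<cdot>\<^sub>v zq)"
      have cvc: "cv \<in> carrier_vec g" unfolding cv_def carrier_vec_def using Hic by simp
      have "xof cv = (\<Sum>i<g. of_int (z i) * \<beta> Hinv i)"
      proof (rule betax)
        fix l assume l: "l < g"
        have "cv $ l = (\<Sum>i<g. Hinv $$ (l,i) * (of_int d \<cdot>\<^sub>v zq) $ i)"
          unfolding cv_def by (rule mv_index[OF Hic zc l])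
        also have "\<dots> = (\<Sum>i<g. of_int d * Hinv $$ (l,i) * of_int (z i))"
          unfolding zq_def by (intro sum.cong refl) simp
        finally show "cv $ l = (\<Sum>i<g. of_int d * Hinv $$ (l,i) * of_int (z i))" .
      qed
      then have ycv: "y = xof cv" using y by simp
      have "Hq *\<^sub>v cv = (Hq * Hinv) *\<^sub>v (of_int d \<cdot>\<^sub>v zq)" unfolding cv_def using Hqc Hic zc
        by (simp add: assoc_mult_mat_vec)
      also have "\<dots> = of_int d \<cdot>\<^sub>v zq" using HHi zc by simp
      finally have Hcv: "Hq *\<^sub>v cv = of_int d \<cdot>\<^sub>v zq" .
      define wz where "wz t = (if t < g then z t else 0)" for t
      have Hfcv: "(Hfq *\<^sub>v cv) $ t = of_int d * of_int (wz t)" if t: "t < n*n" for t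
      proof (cases "t < g")
        case True
        then show ?thesis using HqHfq[OF cvc True] Hcv unfolding wz_def zq_def by simp
      next
        case False
        have "(Hfq *\<^sub>v cv) $ t = (\<Sum>j<g. Hfq $$ (t,j) * cv $ j)" by (rule mv_index[OF Hfqc cvc t])
        also have "\<dots> = 0" using Hf0 False t rg2 Hfcar unfolding Hfq_def by (intro sum.neutral) simp
        finally show ?thesis using False unfolding wz_def by simp
      qed
      have Mint: "\<forall>s<n*n. (M *\<^sub>v cv) $ s \<in> \<int>"
      proof (intro allI impI)
        fix s assume s: "s < n*n"
        have Hfv: "Hfq *\<^sub>v cv \<in> carrier_vec (n*n)" using Hfqc cvc by simp
        have "of_int d * (M *\<^sub>v cv) $ s = (Nq *\<^sub>v cv) $ s" using NM[OF cvc s] unfolding Nq_def by simp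
        also have "\<dots> = (Uiq *\<^sub>v (Hfq *\<^sub>v cv)) $ s" unfolding NUiHf using Uiqc Hfqc cvc by simp
        also have "\<dots> = (\<Sum>t<n*n. Uiq $$ (s,t) * (Hfq *\<^sub>v cv) $ t)" by (rule mv_index[OF Uiqc Hfv s])
        also have "\<dots> = (\<Sum>t<n*n. of_int d * of_int (Ui $$ (s,t) * wz t))"
          using s Ui(1) Hfcv unfolding Uiq_def by (intro sum.cong refl) simp
        also have "\<dots> = of_int d * of_int (\<Sum>t<n*n. Ui $$ (s,t) * wz t)"
          by (simp only: sum_distrib_left of_int_sum)
        finally have "of_int d * (M *\<^sub>v cv) $ s = of_int d * of_int (\<Sum>t<n*n. Ui $$ (s,t) * wz t)" .
        then have "(M *\<^sub>v cv) $ s = of_int (\<Sum>t<n*n. Ui $$ (s,t) * wz t)" using d0 by simp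
        then show "(M *\<^sub>v cv) $ s \<in> \<int>" by (metis Ints_of_int)
      qed
      have yc: "y \<in> conductor K R" using claimA[OF cvc] Mint ycv by simp
      have "y * 1 \<in> R" using yc oneK unfolding conductor_def by blast
      moreover have "y \<in> F" using xF ycv by simp
      ultimately have "y \<in> ring_of_integers F" using OF by auto
      then show "y \<in> conductor K R \<inter> ring_of_integers F" using yc by blast
    qed
  qed
qed

end
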